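(* (1) If two triangles $I_1,I_2$ intersect, then there is a triangle $I$ with $\mathrm{span}(I)=\mathrm{span}(I_1)+\mathrm{span}(I_2)$ containing $I_1\cup I_2$. (2) If $A_1,A_2\subseteq\mathbb{Z}^2$ are such that some point of $A_1$ is a neighbor in $\mathbf{G}$ of some point of $A_2$, and $A_j\subseteq D(I_j,1/3)$ for triangles $I_j$ ($j=1,2$), then there is a triangle $I$ with $\mathrm{span}(I)=\mathrm{span}(I_1)+\mathrm{span}(I_2)$ such that $A_1\cup A_2\subseteq D(I,1/3)$.
   Context: For real numbers $a,b,c$, the triangle $L(a,b,c)$ is $\{(x,y)\in\mathbb{R}^2 : -x\le a,\ -y\le b,\ x+y\le c\}$; its span is $\mathrm{span}(L(a,b,c))=a+b+c$. The deflation of $I=L(a,b,c)$ by $d$ is $D(I,d)=L(a-d,b-d,c-d)$. The graph $\mathbf{G}$ on $\mathbb{Z}^2$ joins each point $p$ to $p\pm(1,0)$, $p\pm(0,1)$, $p+(-1,1)$, $p+(1,-1)$. *)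

theory Defs
  imports Complex_Main
begin

definition tri :: "real \<Rightarrow> real \<Rightarrow> real \<Rightarrow> (real \<times> real) set" where
  "tri a b c = {(x, y). - x \<le> a \<and> - y \<le> b \<and> x + y \<le> c}"

definition tri_span :: "real \<Rightarrow> real \<Rightarrow> real \<Rightarrow> real" where
  "tri_span a b c = a + b + c"

definition deflate :: "real \<Rightarrow> real \<Rightarrow> real \<Rightarrow> real \<Rightarrow> (real \<times> real) set" where
  "deflate a b c d = tri (a - d) (b - d) (c - d)"

definition G_adj :: "int \<times> int \<Rightarrow> int \<times> int \<Rightarrow> bool" where
  "G_adj p q \<longleftrightarrow> (fst q - fst p, snd q - snd p) \<in> {(1,0), (-1,0), (0,1), (0,-1), (-1,1), (1,-1)}"

definition emb :: "int \<times> int \<Rightarrow> real \<times> real" where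
  "emb p = (real_of_int (fst p), real_of_int (snd p))"

end

theory Submission
  imports Defs
begin

lemma tri_mono: "a \<le> a' \<Longrightarrow> b \<le> b' \<Longrightarrow> c \<le> c' \<Longrightarrow> tri a b c \<subseteq> tri a' b' c'"
  unfolding tri_def by auto

lemma enlarge:
  fixes a1 b1 c1 a2 b2 c2 :: real
  assumes "min a1 a2 + min b1 b2 + min c1 c2 \<ge> 0"
  shows "\<exists>a b c. tri_span a b c = tri_span a1 b1 c1 + tri_span a2 b2 c2 \<and>
     a1 \<le> a \<and> a2 \<le> a \<and> b1 \<le> b \<and> b2 \<le> b \<and> c1 \<le> c \<and> c2 \<le> c"
proof -
  define s where "s = min a1 a2 + min b1 b2 + min c1 c2"
  show ?thesis
    apply (rule exI[of _ "max a1 a2 + s"], rule exI[of _ "max b1 b2"], rule exI[of _ "max c1 c2"])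
    using assms unfolding s_def tri_span_def by (auto simp: max_def min_def)
qed

theorem lemma2p2:
  shows "(\<forall>a1 b1 c1 a2 b2 c2 :: real.
            tri a1 b1 c1 \<inter> tri a2 b2 c2 \<noteq> {} \<longrightarrow>
            (\<exists>a b c. tri_span a b c = tri_span a1 b1 c1 + tri_span a2 b2 c2 \<and>
                     tri a1 b1 c1 \<union> tri a2 b2 c2 \<subseteq> tri a b c))
       \<and> (\<forall>(A1 :: (int \<times> int) set) (A2 :: (int \<times> int) set) (a1 :: real) b1 c1 a2 b2 c2.
            (\<exists>p\<in>A1. \<exists>q\<in>A2. G_adj p q) \<longrightarrow>
            emb ` A1 \<subseteq> deflate a1 b1 c1 (1/3) \<longrightarrow>
            emb ` A2 \<subseteq> deflate a2 b2 c2 (1/3) \<longrightarrow>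
            (\<exists>a b c. tri_span a b c = tri_span a1 b1 c1 + tri_span a2 b2 c2 \<and>
                     emb ` (A1 \<union> A2) \<subseteq> deflate a b c (1/3)))"
proof (intro conjI allI impI)
  fix a1 b1 c1 a2 b2 c2 :: real
  assume "tri a1 b1 c1 \<inter> tri a2 b2 c2 \<noteq> {}"
  then obtain x y where "(x,y) \<in> tri a1 b1 c1" "(x,y) \<in> tri a2 b2 c2" by auto
  then have "min a1 a2 + min b1 b2 + min c1 c2 \<ge> 0" unfolding tri_def by (auto simp: min_def)
  from enlarge[OF this] obtain a b c where "tri_span a b c = tri_span a1 b1 c1 + tri_span a2 b2 c2"
     "a1 \<le> a" "a2 \<le> a" "b1 \<le> b" "b2 \<le> b" "c1 \<le> c" "c2 \<le> c" by blast
  then show "\<exists>a b c. tri_span a b c = tri_span a1 b1 c1 + tri_span a2 b2 c2 \<and>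
                     tri a1 b1 c1 \<union> tri a2 b2 c2 \<subseteq> tri a b c"
    using tri_mono by blast
next
  fix A1 A2 :: "(int \<times> int) set" and a1 b1 c1 a2 b2 c2 :: real
  assume adj: "\<exists>p\<in>A1. \<exists>q\<in>A2. G_adj p q"
    and h1: "emb ` A1 \<subseteq> deflate a1 b1 c1 (1/3)" and h2: "emb ` A2 \<subseteq> deflate a2 b2 c2 (1/3)"
  from adj obtain p1 p2 q1 q2 where p: "(p1,p2) \<in> A1" and q: "(q1,q2) \<in> A2" and g: "G_adj (p1,p2) (q1,q2)"
    by auto
  have P: "- real_of_int p1 \<le> a1 - 1/3" "- real_of_int p2 \<le> b1 - 1/3" "real_of_int p1 + real_of_int p2 \<le> c1 - 1/3"
    using h1 p unfolding deflate_def tri_def emb_def by auto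
  have Q: "- real_of_int q1 \<le> a2 - 1/3" "- real_of_int q2 \<le> b2 - 1/3" "real_of_int q1 + real_of_int q2 \<le> c2 - 1/3"
    using h2 q unfolding deflate_def tri_def emb_def by auto
  have gc: "(q1 = p1 + 1 \<and> q2 = p2) \<or> (q1 = p1 - 1 \<and> q2 = p2) \<or> (q1 = p1 \<and> q2 = p2 + 1) \<or>
     (q1 = p1 \<and> q2 = p2 - 1) \<or> (q1 = p1 - 1 \<and> q2 = p2 + 1) \<or> (q1 = p1 + 1 \<and> q2 = p2 - 1)"
    using g unfolding G_adj_def by auto
  have "min a1 a2 + min b1 b2 + min c1 c2 \<ge> 0"
    using gc P Q by (auto simp: min_def)
  from enlarge[OF this] obtain a b c where "tri_span a b c = tri_span a1 b1 c1 + tri_span a2 b2 c2"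
     "a1 \<le> a" "a2 \<le> a" "b1 \<le> b" "b2 \<le> b" "c1 \<le> c" "c2 \<le> c" by blast
  moreover have "deflate a1 b1 c1 (1/3) \<subseteq> deflate a b c (1/3)" "deflate a2 b2 c2 (1/3) \<subseteq> deflate a b c (1/3)"
    unfolding deflate_def using calculation by (auto simp: tri_def)
  ultimately have "tri_span a b c = tri_span a1 b1 c1 + tri_span a2 b2 c2 \<and>
                     emb ` (A1 \<union> A2) \<subseteq> deflate a b c (1/3)"
    using h1 h2 unfolding image_Un by blast
  then show "\<exists>a b c. tri_span a b c = tri_span a1 b1 c1 + tri_span a2 b2 c2 \<and>
                     emb ` (A1 \<union> A2) \<subseteq> deflate a b c (1/3)" by blast
qed

end
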